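(* For every $M\in\Lambda^{001}$ the following are equivalent: (1) $M$ is solvable in $\Lambda^{001}$; (2) $M$ is head-normalisable, i.e. $M\longrightarrow_h^* N$ for some $N$ in head normal form; (3) $M$ is solvable in $\Lambda$.
   Context: $\Lambda^{001}$ is the set of possibly infinite λ-terms (trees of variables, abstractions and applications $(M)N$) whose infinite branches all enter infinitely often the argument position $N$ of an application, up to α-equivalence; $\Lambda\subseteq\Lambda^{001}$ is the set of finite λ-terms. $\longrightarrow_\beta$ is one-step β-reduction (contextual closure of $(\lambda x.M)N\to M[N/x]$), $\longrightarrow_\beta^*$ its reflexive-transitive closure. The infinitary reduction $\longrightarrow_\beta^\infty$ is defined by the rules below, with possibly infinite derivations in which every infinite branch passes infinitely often through the third premise of (@): (var) $M\longrightarrow_\beta^* x\Rightarrow M\longrightarrow_\beta^\infty x$; (λ) $M\longrightarrow_\beta^*\lambda x.P$, $P\longrightarrow_\beta^\infty P'$ $\Rightarrow M\longrightarrow_\beta^\infty\lambda x.P'$; (@) $M\longrightarrow_\beta^*(P)Q$, $P\longrightarrow_\beta^\infty P'$, $Q\longrightarrow_\beta^\infty Q'$ $\Rightarrow M\longrightarrow_\beta^\infty(P')Q'$. Head normal forms are terms $\lambda x_1\dots\lambda x_m.(\dots((y)Q_1)\dots)Q_n$; head reduction $\longrightarrow_h$ contracts the redex $(\lambda z.N)P$ of a term $\lambda x_1\dots\lambda x_m.(\dots((\lambda z.N)P)Q_1\dots)Q_n$. A term $M\in\Lambda^{001}$ is solvable in $\Lambda$ (resp. in $\Lambda^{001}$)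 if there exist variables $x_1,\dots,x_m$ and terms $N_1,\dots,N_n\in\Lambda$ (resp. $\in\Lambda^{001}$) such that $(\dots((\lambda x_1\dots\lambda x_m.M)N_1)\dots)N_n\longrightarrow_\beta^*\lambda x.x$ (resp. $\longrightarrow_\beta^\infty\lambda x.x$). *)

theory Defs
  imports Main
begin

codatatype trm = Var nat | Lam trm | App trm trm

primcorec shift :: "nat \<Rightarrow> nat \<Rightarrow> trm \<Rightarrow> trm" where
  "shift d c M = (case M of
      Var i \<Rightarrow> (if i < c then Var i else Var (i + d))
    | Lam P \<Rightarrow> Lam (shift d (Suc c) P)
    | App P Q \<Rightarrow> App (shift d c P) (shift d c Q))"

primcorec subst :: "nat \<Rightarrow> trm \<Rightarrow> trm \<Rightarrow> trm" where
  "subst k N M = (case M of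
      Var i \<Rightarrow> (if i < k then Var i
                 else if i = k then (case N of Var j \<Rightarrow> Var j | Lam P \<Rightarrow> Lam P | App P Q \<Rightarrow> App P Q)
                 else Var (i - 1))
    | Lam P \<Rightarrow> Lam (subst (Suc k) (shift 1 0 N) P)
    | App P Q \<Rightarrow> App (subst k N P) (subst k N Q))"

text \<open>Named abstraction: free variable named i occurs at depth d as Var (i + d).
  absv j d M binds the free variable j (to the new binder), keeping all other names.\<close>
primcorec absv :: "nat \<Rightarrow> nat \<Rightarrow> trm \<Rightarrow> trm" where
  "absv j d M = (case M of
      Var k \<Rightarrow> (if k < d then Var k else if k = d + j then Var d else Var (Suc k))
    | Lam P \<Rightarrow> Lam (absv j (Suc d) P)
    | App P Q \<Rightarrow> App (absv j d P) (absv j d Q))"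

definition abstr :: "nat \<Rightarrow> trm \<Rightarrow> trm" where
  "abstr x M = Lam (absv x 0 M)"

definition abstrs :: "nat list \<Rightarrow> trm \<Rightarrow> trm" where
  "abstrs xs M = foldr abstr xs M"

definition apps :: "trm \<Rightarrow> trm list \<Rightarrow> trm" where
  "apps M Ns = foldl App M Ns"

definition idt :: trm where "idt = Lam (Var 0)"

inductive finite_trm :: "trm \<Rightarrow> bool" where
  "finite_trm (Var i)"
| "finite_trm P \<Longrightarrow> finite_trm (Lam P)"
| "finite_trm P \<Longrightarrow> finite_trm Q \<Longrightarrow> finite_trm (App P Q)"

datatype dir = Body | Fun | Arg

inductive child :: "trm \<Rightarrow> dir \<Rightarrow> trm \<Rightarrow> bool" where
  "child (Lam P) Body P"
| "child (App P Q) Fun P"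
| "child (App P Q) Arg Q"

definition in001 :: "trm \<Rightarrow> bool" where
  "in001 M \<longleftrightarrow> (\<forall>(t :: nat \<Rightarrow> trm) (d :: nat \<Rightarrow> dir).
      t 0 = M \<and> (\<forall>n. child (t n) (d n) (t (Suc n))) \<longrightarrow> infinite {n. d n = Arg})"

inductive beta :: "trm \<Rightarrow> trm \<Rightarrow> bool" where
  redex: "beta (App (Lam M) N) (subst 0 N M)"
| lam: "beta M M' \<Longrightarrow> beta (Lam M) (Lam M')"
| appL: "beta M M' \<Longrightarrow> beta (App M N) (App M' N)"
| appR: "beta N N' \<Longrightarrow> beta (App M N) (App M N')"

abbreviation beta_star :: "trm \<Rightarrow> trm \<Rightarrow> bool" where
  "beta_star \<equiv> beta\<^sup>*\<^sup>*"

text \<open>The inner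
  inductive layer covers rules (var), (lambda) and the first two premises of (@);
  only the third premise of (@) goes through the outer coinductive relation R.\<close>
inductive inf_step :: "(trm \<Rightarrow> trm \<Rightarrow> bool) \<Rightarrow> trm \<Rightarrow> trm \<Rightarrow> bool" for R where
  ivar: "beta_star M (Var x) \<Longrightarrow> inf_step R M (Var x)"
| ilam: "beta_star M (Lam P) \<Longrightarrow> inf_step R P P' \<Longrightarrow> inf_step R M (Lam P')"
| iapp: "beta_star M (App P Q) \<Longrightarrow> inf_step R P P' \<Longrightarrow> R Q Q' \<Longrightarrow> inf_step R M (App P' Q')"

lemma inf_step_mono[mono]:
  "(\<And>x y. R x y \<longrightarrow> S x y) \<Longrightarrow> inf_step R M N \<longrightarrow> inf_step S M N"
proof
  assume h: "\<And>x y. R x y \<longrightarrow> S x y"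
  show "inf_step R M N \<Longrightarrow> inf_step S M N"
    by (induction rule: inf_step.induct) (auto intro: inf_step.intros h[rule_format])
qed

coinductive beta_inf :: "trm \<Rightarrow> trm \<Rightarrow> bool" where
  "inf_step beta_inf M N \<Longrightarrow> beta_inf M N"

inductive hnf_app :: "trm \<Rightarrow> bool" where
  "hnf_app (Var y)"
| "hnf_app P \<Longrightarrow> hnf_app (App P Q)"

inductive hnf :: "trm \<Rightarrow> bool" where
  "hnf_app P \<Longrightarrow> hnf P"
| "hnf P \<Longrightarrow> hnf (Lam P)"

inductive head_app :: "trm \<Rightarrow> trm \<Rightarrow> bool" where
  "head_app (App (Lam N) P) (subst 0 P N)"
| "head_app M M' \<Longrightarrow> head_app (App M Q) (App M' Q)"

inductive head :: "trm \<Rightarrow> trm \<Rightarrow> bool" where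
  "head_app M M' \<Longrightarrow> head M M'"
| "head M M' \<Longrightarrow> head (Lam M) (Lam M')"

definition head_normalisable :: "trm \<Rightarrow> bool" where
  "head_normalisable M \<longleftrightarrow> (\<exists>N. head\<^sup>*\<^sup>* M N \<and> hnf N)"

definition solvable_Lambda :: "trm \<Rightarrow> bool" where
  "solvable_Lambda M \<longleftrightarrow> (\<exists>xs Ns. (\<forall>N\<in>set Ns. finite_trm N) \<and>
      beta_star (apps (abstrs xs M) Ns) idt)"

definition solvable_001 :: "trm \<Rightarrow> bool" where
  "solvable_001 M \<longleftrightarrow> (\<exists>xs Ns. (\<forall>N\<in>set Ns. in001 N) \<and>
      beta_inf (apps (abstrs xs M) Ns) idt)"

end

theory Submission
  imports Defs "HOL-Library.Multiset"
begin


lemma shift_Var[simp]: "shift d c (Var i) = (if i < c then Var i else Var (i + d))"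
  by (subst shift.code) simp
lemma shift_Lam[simp]: "shift d c (Lam P) = Lam (shift d (Suc c) P)"
  by (subst shift.code) simp
lemma shift_App[simp]: "shift d c (App P Q) = App (shift d c P) (shift d c Q)"
  by (subst shift.code) simp
lemma subst_Var[simp]: "subst k N (Var i) = (if i < k then Var i else if i = k then N else Var (i - 1))"
  by (subst subst.code) (auto split: trm.split)
lemma subst_Lam[simp]: "subst k N (Lam P) = Lam (subst (Suc k) (shift 1 0 N) P)"
  by (subst subst.code) simp
lemma subst_App[simp]: "subst k N (App P Q) = App (subst k N P) (subst k N Q)"
  by (subst subst.code) simp
lemma absv_Var[simp]: "absv j d (Var k) = (if k < d then Var k else if k = d + j then Var d else Var (Suc k))"
  by (subst absv.code) simp
lemma absv_Lam[simp]: "absv j d (Lam P) = Lam (absv j (Suc d) P)"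
  by (subst absv.code) simp
lemma absv_App[simp]: "absv j d (App P Q) = App (absv j d P) (absv j d Q)"
  by (subst absv.code) simp

lemma absv_shift: "c \<le> d \<Longrightarrow> absv j (Suc d) (shift 1 c Q) = shift 1 c (absv j d Q)"
proof (coinduction arbitrary: c d Q rule: trm.coinduct_strong)
  case (Eq_trm c d Q)
  then show ?case
    apply (cases Q)
      apply simp_all
     apply (rule disjI1; rule exI[of _ "Suc c"]; rule exI[of _ "Suc d"]; force)
    apply blast
    done
qed

lemma absv_shift1: "c \<le> d \<Longrightarrow> absv j (Suc d) (shift (Suc 0) c Q) = shift (Suc 0) c (absv j d Q)"
  using absv_shift by simp

lemma absv_subst: "k \<le> d \<Longrightarrow> absv j d (subst k Q P) = subst k (absv j d Q) (absv j (Suc d) P)"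
proof (coinduction arbitrary: k d Q P rule: trm.coinduct_strong)
  case (Eq_trm k d Q P)
  then show ?case
    apply (cases P)
      apply (simp_all add: absv_shift)
      apply arith
     apply (rule disjI1; rule exI[of _ "Suc k"]; rule exI[of _ "Suc d"]; rule exI[of _ "shift 1 0 Q"]; simp add: absv_shift1; blast)
    apply blast
    done
qed
lemma beta_absv: "beta M M' \<Longrightarrow> beta (absv j d M) (absv j d M')"
proof (induction arbitrary: d rule: beta.induct)
  case (redex M N)
  show ?case using beta.redex[of "absv j (Suc d) M" "absv j d N"] by (simp add: absv_subst)
qed (auto intro: beta.intros)



lemma star_lam: "beta_star M M' \<Longrightarrow> beta_star (Lam M) (Lam M')"
  by (induction rule: rtranclp_induct) (auto intro: rtranclp.rtrancl_into_rtrancl beta.lam)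
lemma star_appL: "beta_star M M' \<Longrightarrow> beta_star (App M N) (App M' N)"
  by (induction rule: rtranclp_induct) (auto intro: rtranclp.rtrancl_into_rtrancl beta.appL)
lemma star_absv: "beta_star M M' \<Longrightarrow> beta_star (absv j d M) (absv j d M')"
  by (induction rule: rtranclp_induct) (auto intro: rtranclp.rtrancl_into_rtrancl beta_absv)
lemma apps_Cons[simp]: "apps M (N # Ns) = apps (App M N) Ns"
  by (simp add: apps_def)
lemma apps_Nil[simp]: "apps M [] = M"
  by (simp add: apps_def)
lemma apps_snoc[simp]: "apps M (Ns @ [N]) = App (apps M Ns) N"
  by (simp add: apps_def)
lemma star_apps: "beta_star M M' \<Longrightarrow> beta_star (apps M Ns) (apps M' Ns)"
  by (induction Ns arbitrary: M M') (auto intro: star_appL)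

lemma head_app_beta: "head_app M M' \<Longrightarrow> beta M M'"
  by (induction rule: head_app.induct) (auto intro: beta.intros)
lemma head_beta: "head M M' \<Longrightarrow> beta M M'"
  by (induction rule: head.induct) (auto intro: beta.intros head_app_beta)
lemma heads_beta: "head\<^sup>*\<^sup>* M M' \<Longrightarrow> beta_star M M'"
  by (induction rule: rtranclp_induct) (auto intro: rtranclp.rtrancl_into_rtrancl head_beta)

definition lams :: "nat \<Rightarrow> trm \<Rightarrow> trm" where "lams m B = (Lam ^^ m) B"
lemma lams_0[simp]: "lams 0 B = B" by (simp add: lams_def)
lemma lams_Suc[simp]: "lams (Suc m) B = Lam (lams m B)" by (simp add: lams_def)

lemma shift_lams_idt[simp]: "shift d c (lams n idt) = lams n idt"
  by (induction n arbitrary: c) (auto simp: idt_def)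
lemma subst_lams_idt[simp]: "subst k Z (lams n idt) = lams n idt"
  by (induction n arbitrary: k Z) (auto simp: idt_def)
lemma finite_lams_idt: "finite_trm (lams n idt)"
  by (induction n) (auto simp: idt_def intro: finite_trm.intros)

lemma subst_lams_closed: "(\<And>c. shift 1 c T = T) \<Longrightarrow> subst k T (lams m B) = lams m (subst (k + m) T B)"
  by (induction m arbitrary: k) auto
lemma subst_apps: "subst k T (apps H Qs) = apps (subst k T H) (map (subst k T) Qs)"
  by (induction Qs arbitrary: H) auto
lemma absv_lams: "absv j d (lams m B) = lams m (absv j (d + m) B)"
  by (induction m arbitrary: d) auto
lemma absv_apps: "absv j d (apps H Qs) = apps (absv j d H) (map (absv j d) Qs)"
  by (induction Qs arbitrary: H) auto

lemma star_redex: "beta_star (apps (Lam P) (N # Ns)) (apps (subst 0 N P) Ns)"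
  by (auto intro: star_apps beta.redex)

lemma red_T: "length Qs = n \<Longrightarrow> beta_star (apps (lams n idt) Qs) idt"
proof (induction Qs arbitrary: n)
  case Nil then show ?case by simp
next
  case (Cons Q Qs)
  then obtain n' where n: "n = Suc n'" by (cases n) auto
  have "beta_star (apps (lams n idt) (Q # Qs)) (apps (lams n' idt) Qs)"
    using star_redex[of "lams n' idt" Q Qs] n by simp
  also have "beta_star \<dots> idt" using Cons n by simp
  finally show ?case .
qed

lemma red_bound:
  assumes "T = lams n idt" "H = T \<or> (\<exists>y. H = Var y \<and> y < m)"
  shows "\<exists>Qs'. length Qs' = length Qs \<and> beta_star (apps (lams m (apps H Qs)) (replicate m T)) (apps T Qs')"
  using assms(2)
proof (induction m arbitrary: H Qs)
  case 0 then show ?case by auto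
next
  case (Suc m)
  have cl: "\<And>c. shift 1 c T = T" using assms(1) by simp
  define H' where "H' = subst m T H"
  have H': "H' = T \<or> (\<exists>y. H' = Var y \<and> y < m)"
    using Suc.prems
  proof
    assume "H = T" then show ?thesis unfolding H'_def using assms(1) by simp
  next
    assume "\<exists>y. H = Var y \<and> y < Suc m"
    then obtain y where y: "H = Var y" "y < Suc m" by blast
    show ?thesis
    proof (cases "y < m")
      case True then show ?thesis using y unfolding H'_def by simp
    next
      case False then have "y = m" using y by simp
      then show ?thesis using y unfolding H'_def by simp
    qed
  qed
  have 1: "beta_star (apps (lams (Suc m) (apps H Qs)) (replicate (Suc m) T))
      (apps (subst 0 T (lams m (apps H Qs))) (replicate m T))"
    using star_redex[of "lams m (apps H Qs)" T "replicate m T"] by simp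
  have 2: "subst 0 T (lams m (apps H Qs)) = lams m (apps H' (map (subst m T) Qs))"
    by (simp add: subst_lams_closed[OF cl] subst_apps H'_def)
  obtain Qs' where Q': "length Qs' = length (map (subst m T) Qs)"
    "beta_star (apps (lams m (apps H' (map (subst m T) Qs))) (replicate m T)) (apps T Qs')"
    using Suc.IH[OF H', of "map (subst m T) Qs"] by blast
  show ?case
    using rtranclp_trans[OF 1[unfolded 2] Q'(2)] Q'(1) by auto
qed

lemma hnf_app_shape: "hnf_app P \<Longrightarrow> \<exists>y Qs. P = apps (Var y) Qs"
proof (induction rule: hnf_app.induct)
  case (2 P Q)
  then obtain y Qs where "P = apps (Var y) Qs" by blast
  then show ?case by (metis apps_snoc)
qed (metis apps_Nil)
lemma hnf_shape: "hnf N \<Longrightarrow> \<exists>m y Qs. N = lams m (apps (Var y) Qs)"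
proof (induction rule: hnf.induct)
  case (1 P) then show ?case using hnf_app_shape by (metis lams_0)
next
  case (2 P) then show ?case by (metis lams_Suc)
qed


lemma hn_solv:
  assumes "head_normalisable M"
  shows "\<exists>xs Ns. (\<forall>N\<in>set Ns. finite_trm N) \<and> beta_star (apps (abstrs xs M) Ns) idt"
proof -
  obtain N where hN: "head\<^sup>*\<^sup>* M N" "hnf N" using assms head_normalisable_def by blast
  then obtain m y Qs where N: "N = lams m (apps (Var y) Qs)" using hnf_shape by blast
  have MN: "beta_star M N" using hN heads_beta by blast
  define T where "T = lams (length Qs) idt"
  have fT: "\<forall>N\<in>set (replicate k T). finite_trm N" for k using finite_lams_idt T_def by simp
  show ?thesis
  proof (cases "y < m")
    case True
    obtain Qs' where Q': "length Qs' = length Qs"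
      "beta_star (apps (lams m (apps (Var y) Qs)) (replicate m T)) (apps T Qs')"
      using red_bound[OF T_def, of "Var y" m Qs] True by auto
    have "beta_star (apps (abstrs [] M) (replicate m T)) (apps N (replicate m T))"
      unfolding abstrs_def foldr_Nil id_apply by (rule star_apps[OF MN])
    also have "beta_star \<dots> (apps T Qs')" using Q'(2) unfolding N .
    also have "beta_star \<dots> idt" using red_T[OF Q'(1)] unfolding T_def .
    finally show ?thesis using fT[of m] by blast
  next
    case False
    define z where "z = y - m"
    have y: "y = m + z" using False z_def by simp
    have "absv z 0 N = lams m (apps (Var m) (map (absv z m) Qs))"
      using N y by (simp add: absv_lams absv_apps)
    then have eq: "abstrs [z] N = lams (Suc m) (apps (Var m) (map (absv z m) Qs))"
      by (simp add: abstrs_def abstr_def)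
    obtain Qs' where Q': "length Qs' = length Qs"
      "beta_star (apps (lams (Suc m) (apps (Var m) (map (absv z m) Qs))) (replicate (Suc m) T)) (apps T Qs')"
      using red_bound[OF T_def, of "Var m" "Suc m" "map (absv z m) Qs"] by auto
    have "beta_star (abstrs [z] M) (abstrs [z] N)"
      using star_lam[OF star_absv[OF MN]] by (simp add: abstrs_def abstr_def)
    then have "beta_star (apps (abstrs [z] M) (replicate (Suc m) T)) (apps (abstrs [z] N) (replicate (Suc m) T))"
      by (rule star_apps)
    also have "beta_star \<dots> (apps T Qs')" using Q'(2) unfolding eq .
    also have "beta_star \<dots> idt" using red_T[OF Q'(1)] unfolding T_def .
    finally show ?thesis using fT[of "Suc m"] by blast
  qed
qed



datatype ty = TV nat | Arr "ty multiset" ty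

type_synonym ctx = "nat \<Rightarrow> ty multiset"

definition single :: "nat \<Rightarrow> ty \<Rightarrow> ctx" where
  "single i A = (\<lambda>j. if j = i then {#A#} else {#})"

abbreviation tyo :: "ctx \<times> ty \<times> nat \<Rightarrow> ty" where "tyo x \<equiv> fst (snd x)"
abbreviation szo :: "ctx \<times> ty \<times> nat \<Rightarrow> nat" where "szo x \<equiv> snd (snd x)"

inductive tp :: "ctx \<Rightarrow> trm \<Rightarrow> ty \<Rightarrow> nat \<Rightarrow> bool" where
  tVar: "tp (single i A) (Var i) A 1"
| tLam: "tp G P B n \<Longrightarrow> tp (\<lambda>i. G (Suc i)) (Lam P) (Arr (G 0) B) (Suc n)"
| tApp: "tp G P (Arr (mset (map tyo L)) B) n \<Longrightarrow> (\<forall>x\<in>set L. tp (fst x) Q (tyo x) (szo x)) \<Longrightarrow>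
    tp (\<lambda>i. G i + sum_list (map (\<lambda>x. fst x i) L)) (App P Q) B (Suc (n + sum_list (map szo L)))"

lemma tLam': "tp G P B n \<Longrightarrow> G' = (\<lambda>i. G (Suc i)) \<Longrightarrow> A = G 0 \<Longrightarrow> m = Suc n \<Longrightarrow> tp G' (Lam P) (Arr A B) m"
  using tLam by simp
lemma tApp': "tp G P (Arr M B) n \<Longrightarrow> M = mset (map tyo L) \<Longrightarrow> (\<forall>x\<in>set L. tp (fst x) Q (tyo x) (szo x)) \<Longrightarrow>
   G' = (\<lambda>i. G i + sum_list (map (\<lambda>x. fst x i) L)) \<Longrightarrow> m = Suc (n + sum_list (map szo L)) \<Longrightarrow> tp G' (App P Q) B m"
  using tApp by simp

inductive_cases typVarE: "tp G (Var i) A n"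
inductive_cases typLamE: "tp G (Lam P) A n"
inductive_cases typAppE: "tp G (App P Q) A n"

definition ins :: "nat \<Rightarrow> ctx \<Rightarrow> ctx" where
  "ins c D = (\<lambda>i. if i < c then D i else if i = c then {#} else D (i - 1))"
definition rem :: "nat \<Rightarrow> ctx \<Rightarrow> ctx" where
  "rem k G = (\<lambda>i. G (if i < k then i else Suc i))"

lemma sum_list_map_zero: "(\<forall>x\<in>set L. f x = 0) \<Longrightarrow> sum_list (map f L) = (0::'a::monoid_add)"
  by (induction L) auto

lemma typ_shift: "tp D Q A s \<Longrightarrow> tp (ins c D) (shift 1 c Q) A s"
proof (induction arbitrary: c rule: tp.induct)
  case (tVar i A)
  show ?case
  proof (cases "i < c")
    case True
    have "ins c (single i A) = single i A" using True by (auto simp: ins_def single_def fun_eq_iff)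
    then show ?thesis using True tp.tVar by simp
  next
    case False
    have "ins c (single i A) = single (Suc i) A" using False by (auto simp: ins_def single_def fun_eq_iff)
    then show ?thesis using False tp.tVar by simp
  qed
next
  case (tLam G P B n)
  show ?case unfolding shift_Lam
    by (rule tLam'[OF tLam.IH[of "Suc c"]]) (auto simp: ins_def fun_eq_iff)
next
  case (tApp G P L B n Q)
  let ?L = "map (\<lambda>x. (ins c (fst x), snd x)) L"
  show ?case unfolding shift_App
    apply (rule tApp'[OF tApp.IH(1)[of c], where L = ?L])
       apply (simp add: comp_def)
    using tApp.IH(2) apply auto[1]
     apply (auto simp: ins_def fun_eq_iff comp_def intro!: sum_list_map_zero)
    done
qed

lemma typ_unshift: "tp D X A s \<Longrightarrow> X = shift 1 c Q \<Longrightarrow> D c = {#} \<and> tp (rem c D) Q A s"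
proof (induction arbitrary: c Q rule: tp.induct)
  case (tVar i A)
  then obtain j where Q: "Q = Var j" by (cases Q) (auto split: if_splits)
  show ?case
  proof (cases "j < c")
    case True
    then have "i = j" using tVar Q by simp
    moreover have "rem c (single j A) = single j A" using True by (auto simp: rem_def single_def fun_eq_iff)
    ultimately show ?thesis using True Q tp.tVar by (simp add: single_def)
  next
    case False
    then have "i = Suc j" using tVar Q by simp
    moreover have "rem c (single (Suc j) A) = single j A" using False by (auto simp: rem_def single_def fun_eq_iff)
    ultimately show ?thesis using False Q tp.tVar by (simp add: single_def)
  qed
next
  case (tLam G P B n)
  then obtain Q1 where Q: "Q = Lam Q1" and P: "P = shift 1 (Suc c) Q1" by (cases Q) (auto split: if_splits)
  from tLam.IH[OF P] have ih: "G (Suc c) = {#}" "tp (rem (Suc c) G) Q1 B n" by auto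
  show ?case unfolding Q
    by (auto simp: ih(1) intro!: tLam'[OF ih(2)]) (auto simp: rem_def fun_eq_iff)
next
  case (tApp G P L B n Q0)
  then obtain Q1 Q2 where Q: "Q = App Q1 Q2" and P: "P = shift 1 c Q1" and Q0: "Q0 = shift 1 c Q2"
    by (cases Q) (auto split: if_splits)
  from tApp.IH(1)[OF P] have ih1: "G c = {#}" "tp (rem c G) Q1 (Arr (mset (map tyo L)) B) n" by auto
  from tApp.IH(2) Q0 have ih2: "\<forall>x\<in>set L. fst x c = {#} \<and> tp (rem c (fst x)) Q2 (tyo x) (szo x)" by auto
  let ?L = "map (\<lambda>x. (rem c (fst x), snd x)) L"
  have "tp (rem c (\<lambda>i. G i + sum_list (map (\<lambda>x. fst x i) L))) (App Q1 Q2) B (Suc (n + sum_list (map szo L)))"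
    apply (rule tApp'[OF ih1(2), where L = ?L])
       apply (simp add: comp_def)
    using ih2 apply auto[1]
     apply (auto simp: rem_def fun_eq_iff comp_def)
    done
  moreover have "sum_list (map (\<lambda>x. fst x c) L) = {#}" using ih2 by (auto intro!: sum_list_map_zero)
  ultimately show ?case using ih1 Q by simp
qed

definition csum :: "(ctx \<times> ty \<times> nat) multiset \<Rightarrow> ctx" where
  "csum D = (\<lambda>i. sum_mset (image_mset (\<lambda>x. fst x i) D))"

lemma csum_empty[simp]: "csum {#} = (\<lambda>i. {#})" by (simp add: csum_def)
lemma csum_single[simp]: "csum {#x#} = fst x" by (simp add: csum_def)
lemma csum_plus[simp]: "csum (D1 + D2) i = csum D1 i + csum D2 i" by (simp add: csum_def)

lemma sum_mset_zero: "(\<forall>x\<in>#D. f x = 0) \<Longrightarrow> sum_mset (image_mset f D) = (0::'a::comm_monoid_add)"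
  by (induction D) auto

lemma image_mset_single: "image_mset f D = {#a#} \<Longrightarrow> \<exists>x. D = {#x#} \<and> f x = a"
proof -
  assume h: "image_mset f D = {#a#}"
  then have "size D = 1" by (metis size_image_mset size_single)
  then obtain x where "D = {#x#}" using size_1_singleton_mset by blast
  then show ?thesis using h by auto
qed

lemma args_subst:
  assumes "\<forall>x\<in>set L. \<forall>D. image_mset tyo D = fst x k \<longrightarrow> (\<forall>y\<in>#D. tp (fst y) N (tyo y) (szo y)) \<longrightarrow>
      (\<exists>m. tp (\<lambda>i. rem k (fst x) i + csum D i) (subst k N Q) (tyo x) m \<and> m + size D = szo x + sum_mset (image_mset szo D))"
    and "image_mset tyo D = sum_list (map (\<lambda>x. fst x k) L)"
    and "\<forall>y\<in>#D. tp (fst y) N (tyo y) (szo y)"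
  shows "\<exists>L'. map tyo L' = map tyo L \<and> (\<forall>x\<in>set L'. tp (fst x) (subst k N Q) (tyo x) (szo x)) \<and>
     (\<forall>i. sum_list (map (\<lambda>x. fst x i) L') = sum_list (map (\<lambda>x. rem k (fst x) i) L) + csum D i) \<and>
     sum_list (map szo L') + size D = sum_list (map szo L) + sum_mset (image_mset szo D)"
  using assms
proof (induction L arbitrary: D)
  case Nil
  then have "D = {#}" by simp
  then show ?case by simp
next
  case (Cons x L)
  from Cons.prems(2) have "image_mset tyo D = fst x k + sum_list (map (\<lambda>x. fst x k) L)" by simp
  then obtain D1 D2 where D: "D = D1 + D2" "fst x k = image_mset tyo D1" "sum_list (map (\<lambda>x. fst x k) L) = image_mset tyo D2"
    using image_mset_eq_plusD by blast
  from Cons.prems(1) D Cons.prems(3) obtain m where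
    m: "tp (\<lambda>i. rem k (fst x) i + csum D1 i) (subst k N Q) (tyo x) m" "m + size D1 = szo x + sum_mset (image_mset szo D1)"
    by auto
  from Cons.IH[of D2] Cons.prems D obtain L' where L':
    "map tyo L' = map tyo L" "\<forall>x\<in>set L'. tp (fst x) (subst k N Q) (tyo x) (szo x)"
    "\<forall>i. sum_list (map (\<lambda>x. fst x i) L') = sum_list (map (\<lambda>x. rem k (fst x) i) L) + csum D2 i"
    "sum_list (map szo L') + size D2 = sum_list (map szo L) + sum_mset (image_mset szo D2)"
    by auto
  show ?case
    apply (rule exI[of _ "((\<lambda>i. rem k (fst x) i + csum D1 i), tyo x, m) # L'"])
    using m L' D by (auto simp: add_ac)
qed

lemma typ_subst: "tp G P B n \<Longrightarrow> image_mset tyo D = G k \<Longrightarrow> (\<forall>x\<in>#D. tp (fst x) N (tyo x) (szo x)) \<Longrightarrow>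
   \<exists>m. tp (\<lambda>i. rem k G i + csum D i) (subst k N P) B m \<and> m + size D = n + sum_mset (image_mset szo D)"
proof (induction arbitrary: k D N rule: tp.induct)
  case (tVar i A)
  show ?case
  proof (cases "i = k")
    case True
    then obtain x where x: "D = {#x#}" "tyo x = A" using tVar.prems(1) image_mset_single[of tyo D A]
      by (auto simp: single_def)
    have "(\<lambda>j. rem k (single i A) j + csum D j) = fst x" using True x by (auto simp: rem_def single_def fun_eq_iff)
    then show ?thesis using True x tVar.prems(2) by auto
  next
    case False
    then have D: "D = {#}" using tVar.prems(1) by (simp add: single_def)
    show ?thesis
    proof (cases "i < k")
      case True
      have "(\<lambda>j. rem k (single i A) j + csum D j) = single i A" using True D by (auto simp: rem_def single_def fun_eq_iff)
      then show ?thesis using True D tp.tVar by auto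
    next
      case False
      have "(\<lambda>j. rem k (single i A) j + csum D j) = single (i - 1) A" using False \<open>i \<noteq> k\<close> D
        by (auto simp: rem_def single_def fun_eq_iff)
      then show ?thesis using False \<open>i \<noteq> k\<close> D tp.tVar by auto
    qed
  qed
next
  case (tLam G P B n)
  let ?D = "image_mset (\<lambda>x. (ins 0 (fst x), snd x)) D"
  have a1: "image_mset tyo ?D = G (Suc k)" using tLam.prems(1) by (simp add: multiset.map_comp comp_def)
  have a2: "\<forall>x\<in>#?D. tp (fst x) (shift 1 0 N) (tyo x) (szo x)" using tLam.prems(2) typ_shift by auto
  obtain m where m: "tp (\<lambda>i. rem (Suc k) G i + csum ?D i) (subst (Suc k) (shift 1 0 N) P) B m"
    "m + size ?D = n + sum_mset (image_mset szo ?D)"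
    using tLam.IH[OF a1 a2] by blast
  have c0: "csum ?D 0 = {#}" unfolding csum_def by (auto simp: multiset.map_comp comp_def ins_def intro!: sum_mset_zero)
  have cS: "csum ?D (Suc i) = csum D i" for i unfolding csum_def by (simp add: multiset.map_comp comp_def ins_def)
  show ?case
    apply (rule exI[of _ "Suc m"])
    apply (simp only: subst_Lam)
    apply (rule conjI)
     apply (rule tLam'[OF m(1)])
    using c0 cS m(2) by (auto simp: rem_def fun_eq_iff multiset.map_comp comp_def)
next
  case (tApp G P L B n Q)
  from tApp.prems(1) have "image_mset tyo D = G k + sum_list (map (\<lambda>x. fst x k) L)" by simp
  then obtain D1 D2 where D: "D = D1 + D2" "G k = image_mset tyo D1" "sum_list (map (\<lambda>x. fst x k) L) = image_mset tyo D2"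
    using image_mset_eq_plusD by blast
  obtain m1 where m1: "tp (\<lambda>i. rem k G i + csum D1 i) (subst k N P) (Arr (mset (map tyo L)) B) m1"
     "m1 + size D1 = n + sum_mset (image_mset szo D1)"
    using tApp.IH(1)[of D1 k N] D tApp.prems(2) by auto
  have ih2: "\<forall>x\<in>set L. \<forall>D. image_mset tyo D = fst x k \<longrightarrow> (\<forall>y\<in>#D. tp (fst y) N (tyo y) (szo y)) \<longrightarrow>
      (\<exists>m. tp (\<lambda>i. rem k (fst x) i + csum D i) (subst k N Q) (tyo x) m \<and> m + size D = szo x + sum_mset (image_mset szo D))"
    using tApp.IH(2) by blast
  obtain L' where L': "map tyo L' = map tyo L" "\<forall>x\<in>set L'. tp (fst x) (subst k N Q) (tyo x) (szo x)"
     "\<forall>i. sum_list (map (\<lambda>x. fst x i) L') = sum_list (map (\<lambda>x. rem k (fst x) i) L) + csum D2 i"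
     "sum_list (map szo L') + size D2 = sum_list (map szo L) + sum_mset (image_mset szo D2)"
    using args_subst[OF ih2 D(3)[symmetric]] tApp.prems(2) D(1) by auto
  show ?case
    apply (rule exI[of _ "Suc (m1 + sum_list (map szo L'))"])
    apply (simp only: subst_App)
    apply (rule conjI)
     apply (rule tApp'[OF m1(1), where L = L'])
    using L' apply (metis mset_map)
    using L' apply blast
    using L' D apply (auto simp: rem_def fun_eq_iff add_ac)[1]
     apply simp
    using m1(2) L'(4) D(1) by simp
qed



lemma list_choice: "\<forall>x\<in>set xs. \<exists>y. P x y \<Longrightarrow> \<exists>ps. map fst ps = xs \<and> (\<forall>p\<in>set ps. P (fst p) (snd p))"
proof (induction xs)
  case Nil then show ?case by simp
next
  case (Cons x xs)
  then obtain y where "P x y" by auto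
  moreover from Cons obtain ps where "map fst ps = xs" "\<forall>p\<in>set ps. P (fst p) (snd p)" by auto
  ultimately show ?case by (intro exI[of _ "(x, y) # ps"]) auto
qed

lemma image_mset_sum_list: "image_mset f (sum_list Ms) = sum_list (map (image_mset f) Ms)"
  by (induction Ms) auto
lemma csum_sum_list: "csum (sum_list Ms) i = sum_list (map (\<lambda>M. csum M i) Ms)"
  by (induction Ms) auto
lemma in_sum_list: "x \<in># sum_list Ms \<Longrightarrow> \<exists>M\<in>set Ms. x \<in># M"
  by (induction Ms) auto

lemma anti_var: "tp G' X B m \<Longrightarrow> \<exists>G D n. tp G (Var k) B n \<and> image_mset tyo D = G k \<and>
   (\<forall>x\<in>#D. tp (fst x) X (tyo x) (szo x)) \<and> G' = (\<lambda>i. rem k G i + csum D i)"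
  apply (rule exI[of _ "single k B"], rule exI[of _ "{#(G', B, m)#}"], rule exI[of _ 1])
  using tp.tVar[of k B] by (auto simp: single_def rem_def fun_eq_iff)

lemma typ_antisubst: "tp G' X B m \<Longrightarrow> X = subst k N P \<Longrightarrow> \<exists>G D n. tp G P B n \<and> image_mset tyo D = G k \<and>
   (\<forall>x\<in>#D. tp (fst x) N (tyo x) (szo x)) \<and> G' = (\<lambda>i. rem k G i + csum D i)"
proof (induction arbitrary: k N P rule: tp.induct)
  case (tVar i A)
  then obtain j where P: "P = Var j" by (cases P) auto
  show ?case
  proof (cases "j = k")
    case True
    then show ?thesis using anti_var[OF tp.tVar[of i A], of k] tVar P by auto
  next
    case False
    have "single i A = (\<lambda>i. rem k (single j A) i + csum {#} i)"
      using False tVar P by (auto simp: rem_def single_def fun_eq_iff split: if_splits)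
    then show ?thesis
      apply (intro exI[of _ "single j A"] exI[of _ "{#}"] exI[of _ 1])
      using False P tp.tVar by (auto simp: single_def)
  qed
next
  case (tLam G0 P0 B0 n0)
  show ?case
  proof (cases P)
    case (Var j)
    then have "j = k" "N = Lam P0" using tLam.prems by (auto split: if_splits)
    then show ?thesis using anti_var[OF tp.tLam[OF tLam.hyps], of k] Var by auto
  next
    case (App P1 P2) then show ?thesis using tLam.prems by simp
  next
    case (Lam P1)
    then have P0: "P0 = subst (Suc k) (shift 1 0 N) P1" using tLam.prems by simp
    obtain G1 D1 n1 where ih: "tp G1 P1 B0 n1" "image_mset tyo D1 = G1 (Suc k)"
      "\<forall>x\<in>#D1. tp (fst x) (shift 1 0 N) (tyo x) (szo x)" "G0 = (\<lambda>i. rem (Suc k) G1 i + csum D1 i)"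
      using tLam.IH[OF P0] by blast
    have un: "\<forall>x\<in>#D1. fst x 0 = {#} \<and> tp (rem 0 (fst x)) N (tyo x) (szo x)"
      using ih(3) typ_unshift by blast
    let ?D = "image_mset (\<lambda>x. (rem 0 (fst x), snd x)) D1"
    have c0: "csum D1 0 = {#}" unfolding csum_def using un by (auto intro!: sum_mset_zero)
    have e0: "G0 0 = G1 0" using ih(4) c0 by (simp add: rem_def)
    have f1: "tp (\<lambda>i. G1 (Suc i)) (Lam P1) (Arr (G0 0) B0) (Suc n1)" unfolding e0 by (rule tp.tLam[OF ih(1)])
    have f2: "image_mset tyo ?D = (\<lambda>i. G1 (Suc i)) k" using ih(2) by (simp add: multiset.map_comp comp_def)
    have f3: "\<forall>x\<in>#?D. tp (fst x) N (tyo x) (szo x)" using un by auto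
    have f4: "(\<lambda>i. G0 (Suc i)) = (\<lambda>i. rem k (\<lambda>i. G1 (Suc i)) i + csum ?D i)"
      unfolding ih(4) fun_eq_iff rem_def csum_def by (simp add: multiset.map_comp comp_def)
    show ?thesis unfolding Lam
      by (intro exI[of _ "\<lambda>i. G1 (Suc i)"] exI[of _ ?D] exI[of _ "Suc n1"] conjI f1 f2 f3 f4)
  qed
next
  case (tApp G0 P0 L B n0 Q0)
  show ?case
  proof (cases P)
    case (Var j)
    then have "j = k" "N = App P0 Q0" using tApp.prems by (auto split: if_splits)
    have h2: "\<forall>x\<in>set L. tp (fst x) Q0 (tyo x) (szo x)" using tApp.IH(2) by blast
    show ?thesis using anti_var[OF tp.tApp[OF tApp.hyps(1) h2], of k] \<open>j = k\<close> \<open>N = App P0 Q0\<close> Var by auto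
  next
    case (Lam P1) then show ?thesis using tApp.prems by simp
  next
    case (App P1 P2)
    then have P0: "P0 = subst k N P1" and Q0: "Q0 = subst k N P2" using tApp.prems by auto
    obtain G1 D1 n1 where ih1: "tp G1 P1 (Arr (mset (map tyo L)) B) n1" "image_mset tyo D1 = G1 k"
      "\<forall>x\<in>#D1. tp (fst x) N (tyo x) (szo x)" "G0 = (\<lambda>i. rem k G1 i + csum D1 i)"
      using tApp.IH(1)[OF P0] by (elim exE conjE) (intro that)
    define \<Phi> where "\<Phi> x y \<longleftrightarrow> tp (fst y) P2 (tyo x) (snd (snd y)) \<and> image_mset tyo (fst (snd y)) = fst y k \<and>
       (\<forall>z\<in>#fst (snd y). tp (fst z) N (tyo z) (szo z)) \<and> fst x = (\<lambda>i. rem k (fst y) i + csum (fst (snd y)) i)"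
      for x :: "ctx \<times> ty \<times> nat" and y :: "ctx \<times> (ctx \<times> ty \<times> nat) multiset \<times> nat"
    have "\<forall>x\<in>set L. \<exists>y. \<Phi> x y"
    proof
      fix x assume x: "x \<in> set L"
      have "\<exists>G D n. tp G P2 (tyo x) n \<and> image_mset tyo D = G k \<and>
       (\<forall>z\<in>#D. tp (fst z) N (tyo z) (szo z)) \<and> fst x = (\<lambda>i. rem k G i + csum D i)"
        using conjunct2[OF bspec[OF tApp.IH(2) x], rule_format, OF Q0] .
      then obtain G D n where "tp G P2 (tyo x) n" "image_mset tyo D = G k"
       "\<forall>z\<in>#D. tp (fst z) N (tyo z) (szo z)" "fst x = (\<lambda>i. rem k G i + csum D i)"
        by blast
      then have "\<Phi> x (G, D, n)" unfolding \<Phi>_def by simp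
      then show "\<exists>y. \<Phi> x y" ..
    qed
    from list_choice[OF this] obtain ps where ps0: "map fst ps = L" "\<forall>p\<in>set ps. \<Phi> (fst p) (snd p)"
      by blast
    have ps: "map fst ps = L" "\<forall>p\<in>set ps. tp (fst (snd p)) P2 (tyo (fst p)) (snd (snd (snd p))) \<and>
       image_mset tyo (fst (snd (snd p))) = fst (snd p) k \<and>
       (\<forall>z\<in>#fst (snd (snd p)). tp (fst z) N (tyo z) (szo z)) \<and>
       fst (fst p) = (\<lambda>i. rem k (fst (snd p)) i + csum (fst (snd (snd p))) i)"
      using ps0 unfolding \<Phi>_def by auto
    define L' where "L' = map (\<lambda>p. (fst (snd p), tyo (fst p), snd (snd (snd p)))) ps"
    define G where "G = (\<lambda>i. G1 i + sum_list (map (\<lambda>x. fst x i) L'))"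
    define D where "D = D1 + sum_list (map (\<lambda>p. fst (snd (snd p))) ps)"
    have tyL: "map tyo L' = map tyo L" unfolding L'_def ps(1)[symmetric] by simp
    have t: "tp G (App P1 P2) B (Suc (n1 + sum_list (map szo L')))"
      unfolding G_def
      apply (rule tp.tApp)
      using ih1(1) tyL apply simp
      using ps(2) unfolding L'_def by auto
    have i: "image_mset tyo D = G k"
      unfolding D_def G_def L'_def using ps(2)
      by (simp add: image_mset_sum_list ih1(2) comp_def cong: map_cong)
    have d: "\<forall>x\<in>#D. tp (fst x) N (tyo x) (szo x)"
      unfolding D_def using ih1(3) ps(2) by (auto dest!: in_sum_list)
    have sl: "sum_list (map (\<lambda>x. fst x i) L) = sum_list (map (\<lambda>p. rem k (fst (snd p)) i + csum (fst (snd (snd p))) i) ps)" for i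
      unfolding ps(1)[symmetric] using ps(2) by (simp add: comp_def cong: map_cong)
    have g: "(\<lambda>i. G0 i + sum_list (map (\<lambda>x. fst x i) L)) = (\<lambda>i. rem k G i + csum D i)"
      unfolding sl G_def D_def L'_def ih1(4)
      apply (rule ext)
      by (simp add: rem_def csum_sum_list sum_list_addf comp_def)
    show ?thesis unfolding App
      by (intro exI[of _ G] exI[of _ D] exI[of _ "Suc (n1 + sum_list (map szo L'))"] conjI t i d g)
  qed
qed



lemma typAppE': "tp G (App P Q) B n \<Longrightarrow> (\<And>G1 L n1. G = (\<lambda>i. G1 i + sum_list (map (\<lambda>x. fst x i) L)) \<Longrightarrow>
   tp G1 P (Arr (mset (map tyo L)) B) n1 \<Longrightarrow> \<forall>x\<in>set L. tp (fst x) Q (tyo x) (szo x) \<Longrightarrow>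
   n = Suc (n1 + sum_list (map szo L)) \<Longrightarrow> thesis) \<Longrightarrow> thesis"
  by (erule tp.cases) auto

lemma sum_mset_image_mset_list[simp]: "sum_mset (image_mset f (mset xs)) = sum_list (map f xs)"
  by (induction xs) auto

lemma beta_exp: "beta X Y \<Longrightarrow> tp G Y B n \<Longrightarrow> \<exists>n'. tp G X B n'"
proof (induction arbitrary: G B n rule: beta.induct)
  case (redex M N)
  obtain G0 D n0 where a: "tp G0 M B n0" "image_mset tyo D = G0 0" "\<forall>x\<in>#D. tp (fst x) N (tyo x) (szo x)"
    "G = (\<lambda>i. rem 0 G0 i + csum D i)"
    using typ_antisubst[OF redex refl] by (elim exE conjE) (intro that)
  obtain Ld where Ld: "mset Ld = D" using ex_mset by blast
  show ?case
    apply (rule exI)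
    apply (rule tApp'[OF tLam[OF a(1)], where L = Ld])
    using a(2) Ld apply (simp add: mset_map)
    using a(3) unfolding Ld[symmetric] apply simp
    using a(4) unfolding Ld[symmetric] apply (simp add: rem_def csum_def fun_eq_iff)
    by (rule refl)
next
  case (lam M M')
  from lam.prems obtain G0 B0 n0 where "G = (\<lambda>i. G0 (Suc i))" "B = Arr (G0 0) B0" "tp G0 M' B0 n0"
    by (elim typLamE) blast
  then show ?case using lam.IH tLam by blast
next
  case (appL M M' N)
  from appL.prems obtain G1 L n1 where a: "G = (\<lambda>i. G1 i + sum_list (map (\<lambda>x. fst x i) L))"
     "tp G1 M' (Arr (mset (map tyo L)) B) n1" "\<forall>x\<in>set L. tp (fst x) N (tyo x) (szo x)"
    by (elim typAppE') blast
  obtain n' where "tp G1 M (Arr (mset (map tyo L)) B) n'" using appL.IH[OF a(2)] by blast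
  then show ?case using tApp[OF _ a(3)] a(1) by blast
next
  case (appR N N' M)
  from appR.prems obtain G1 L n1 where a: "G = (\<lambda>i. G1 i + sum_list (map (\<lambda>x. fst x i) L))"
     "tp G1 M (Arr (mset (map tyo L)) B) n1" "\<forall>x\<in>set L. tp (fst x) N' (tyo x) (szo x)"
    by (elim typAppE') blast
  have "\<forall>x\<in>set L. \<exists>y. tp (fst x) N (tyo x) y" using a(3) appR.IH by blast
  from list_choice[OF this] obtain ps where ps: "map fst ps = L" "\<forall>p\<in>set ps. tp (fst (fst p)) N (tyo (fst p)) (snd p)"
    by blast
  let ?L = "map (\<lambda>p. (fst (fst p), tyo (fst p), snd p)) ps"
  show ?case
    apply (rule exI)
    apply (rule tApp'[OF a(2), where L = ?L])
    using ps apply (simp add: comp_def flip: ps(1))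
    using ps apply auto[1]
     apply (simp add: a(1) comp_def flip: ps(1))
    by (rule refl)
qed

lemma star_exp: "beta_star X Y \<Longrightarrow> tp G Y B n \<Longrightarrow> \<exists>n'. tp G X B n'"
proof (induction arbitrary: n rule: converse_rtranclp_induct)
  case base then show ?case by blast
next
  case (step X Z)
  then obtain n' where "tp G Z B n'" by blast
  then show ?case using beta_exp step(1) by blast
qed

lemma head_app_sr: "head_app X X' \<Longrightarrow> tp G X B n \<Longrightarrow> \<exists>n'<n. tp G X' B n'"
proof (induction arbitrary: G B n rule: head_app.induct)
  case (1 N P)
  from "1" obtain G1 L n1 where a: "G = (\<lambda>i. G1 i + sum_list (map (\<lambda>x. fst x i) L))"
     "tp G1 (Lam N) (Arr (mset (map tyo L)) B) n1" "\<forall>x\<in>set L. tp (fst x) P (tyo x) (szo x)"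
     "n = Suc (n1 + sum_list (map szo L))"
    by (elim typAppE') blast
  from a(2) obtain G0 n0 where b: "G1 = (\<lambda>i. G0 (Suc i))" "G0 0 = mset (map tyo L)" "tp G0 N B n0" "n1 = Suc n0"
    by (elim typLamE) auto
  obtain m where m: "tp (\<lambda>i. rem 0 G0 i + csum (mset L) i) (subst 0 P N) B m"
     "m + size (mset L) = n0 + sum_mset (image_mset szo (mset L))"
    using typ_subst[OF b(3), of "mset L" 0 P] b(2) a(3) by (auto simp: mset_map)
  have "(\<lambda>i. rem 0 G0 i + csum (mset L) i) = G"
    by (simp add: a(1) b(1) rem_def csum_def fun_eq_iff)
  moreover have "m < n" using m(2) a(4) b(4) by simp
  ultimately show ?case using m(1) by blast
next
  case (2 M M' Q)
  from "2.prems" obtain G1 L n1 where a: "G = (\<lambda>i. G1 i + sum_list (map (\<lambda>x. fst x i) L))"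
     "tp G1 M (Arr (mset (map tyo L)) B) n1" "\<forall>x\<in>set L. tp (fst x) Q (tyo x) (szo x)"
     "n = Suc (n1 + sum_list (map szo L))"
    by (elim typAppE') blast
  obtain n' where "n' < n1" "tp G1 M' (Arr (mset (map tyo L)) B) n'" using "2.IH"[OF a(2)] by blast
  then show ?case using tApp[OF _ a(3)] a(1) a(4) by (intro exI[of _ "Suc (n' + sum_list (map szo L))"]) auto
qed

lemma head_sr: "head X X' \<Longrightarrow> tp G X B n \<Longrightarrow> \<exists>n'<n. tp G X' B n'"
proof (induction arbitrary: G B n rule: head.induct)
  case (1 M M') then show ?case using head_app_sr by blast
next
  case (2 M M')
  from "2.prems" obtain G0 B0 n0 where a: "G = (\<lambda>i. G0 (Suc i))" "B = Arr (G0 0) B0" "tp G0 M B0 n0" "n = Suc n0"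
    by (elim typLamE) blast
  obtain n' where "n' < n0" "tp G0 M' B0 n'" using "2.IH"[OF a(3)] by blast
  then show ?case using tLam[of G0 M' B0 n'] a by auto
qed

lemma progress: "tp G X B n \<Longrightarrow> hnf X \<or> (\<exists>X'. head X X')"
proof (induction rule: tp.induct)
  case (tVar i A) then show ?case by (auto intro: hnf.intros hnf_app.intros)
next
  case (tLam G P B n) then show ?case by (auto intro: hnf.intros head.intros)
next
  case (tApp G P L B n Q)
  show ?case
  proof (cases "\<exists>P0. P = Lam P0")
    case True
    then obtain P0 where "P = Lam P0" by blast
    then show ?thesis by (auto intro: head.intros head_app.intros)
  next
    case False
    from tApp.IH(1) show ?thesis
    proof
      assume "hnf P"
      then have "hnf_app P" using False by (cases rule: hnf.cases) auto
      then show ?thesis by (auto intro: hnf.intros hnf_app.intros)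
    next
      assume "\<exists>X'. head P X'"
      then obtain P' where "head P P'" by blast
      then have "head_app P P'" using False by (cases rule: head.cases) auto
      then show ?thesis by (auto intro: head.intros head_app.intros)
    qed
  qed
qed

lemma tp_hn: "tp G X B n \<Longrightarrow> head_normalisable X"
proof (induction n arbitrary: G X B rule: less_induct)
  case (less n)
  from progress[OF less.prems] show ?case
  proof
    assume "hnf X" then show ?thesis unfolding head_normalisable_def by blast
  next
    assume "\<exists>X'. head X X'" then obtain X' where h: "head X X'" by blast
    obtain n' where "n' < n" "tp G X' B n'" using head_sr[OF h less.prems] by blast
    then have "head_normalisable X'" using less.IH by blast
    then show ?thesis using h unfolding head_normalisable_def by (meson converse_rtranclp_into_rtranclp)
  qed
qed

definition rho :: "nat \<Rightarrow> nat \<Rightarrow> nat \<Rightarrow> nat" where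
  "rho j d k = (if k < d then k else if k = d + j then d else Suc k)"

lemma rho_inj: "rho j d a = rho j d b \<Longrightarrow> a = b"
  by (auto simp: rho_def split: if_splits)
lemma rho_Suc: "rho j (Suc d) (Suc i) = Suc (rho j d i)"
  by (auto simp: rho_def)
lemma rho_0: "rho j (Suc d) 0 = 0"
  by (auto simp: rho_def)

lemma tp_absv: "tp G X B n \<Longrightarrow> X = absv j d M \<Longrightarrow> tp (\<lambda>i. G (rho j d i)) M B n"
proof (induction arbitrary: d M rule: tp.induct)
  case (tVar i A)
  then obtain k where M: "M = Var k" "rho j d k = i" by (cases M) (auto simp: rho_def split: if_splits)
  have "(\<lambda>i'. single i A (rho j d i')) = single k A"
    using M(2) rho_inj by (auto simp: single_def fun_eq_iff)
  then show ?case using M tp.tVar by simp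
next
  case (tLam G P B n)
  then obtain M1 where M: "M = Lam M1" "P = absv j (Suc d) M1" by (cases M) (auto split: if_splits)
  show ?case unfolding M(1)
    by (rule tLam'[OF tLam.IH[OF M(2)]]) (auto simp: rho_Suc rho_0)
next
  case (tApp G P L B n Q)
  then obtain M1 M2 where M: "M = App M1 M2" "P = absv j d M1" "Q = absv j d M2" by (cases M) (auto split: if_splits)
  have ih2: "\<forall>x\<in>set L. tp (\<lambda>i. fst x (rho j d i)) M2 (tyo x) (szo x)" using tApp.IH(2) M(3) by blast
  let ?L = "map (\<lambda>x. (\<lambda>i. fst x (rho j d i), snd x)) L"
  show ?case unfolding M(1)
    apply (rule tApp'[OF tApp.IH(1)[OF M(2)], where L = ?L])
    apply (simp add: comp_def)
    using ih2 apply auto[1]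
     apply (simp add: comp_def)
    by (simp add: comp_def)
qed

lemma tp_apps: "tp G (apps X Ns) B n \<Longrightarrow> \<exists>G' B' n'. tp G' X B' n'"
proof (induction Ns arbitrary: X G B n)
  case Nil then show ?case by auto
next
  case (Cons N Ns)
  have "tp G (apps (App X N) Ns) B n" using Cons.prems by simp
  then obtain G' B' n' where "tp G' (App X N) B' n'" using Cons.IH by blast
  then show ?case by (elim typAppE') blast
qed

lemma tp_abstrs: "tp G (abstrs xs M) B n \<Longrightarrow> \<exists>G' B' n'. tp G' M B' n'"
proof (induction xs arbitrary: G B n)
  case Nil then show ?case by (auto simp: abstrs_def)
next
  case (Cons x xs)
  then have "tp G (Lam (absv x 0 (abstrs xs M))) B n" by (simp add: abstrs_def abstr_def)
  then obtain G0 B0 n0 where "tp G0 (absv x 0 (abstrs xs M)) B0 n0" by (elim typLamE) blast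
  from tp_absv[OF this refl] Cons.IH show ?case by blast
qed

lemma tp_idt: "tp (\<lambda>_. {#}) idt (Arr {#TV 0#} (TV 0)) 2"
  unfolding idt_def by (rule tLam'[OF tp.tVar[of 0 "TV 0"]]) (auto simp: single_def)

lemma key: "beta_star (apps (abstrs xs M) Ns) idt \<Longrightarrow> head_normalisable M"
proof -
  assume "beta_star (apps (abstrs xs M) Ns) idt"
  from star_exp[OF this tp_idt] obtain n' where "tp (\<lambda>_. {#}) (apps (abstrs xs M) Ns) (Arr {#TV 0#} (TV 0)) n'" by blast
  then obtain G B n where "tp G (abstrs xs M) B n" using tp_apps by blast
  then obtain G B n where "tp G M B n" using tp_abstrs by blast
  then show ?thesis using tp_hn by blast
qed

inductive_cases beta_infE: "beta_inf M N"
inductive_cases inf_stepLamE: "inf_step R M (Lam P)"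
inductive_cases inf_stepVarE: "inf_step R M (Var x)"

lemma inf_idt: "beta_inf X idt \<Longrightarrow> beta_star X idt"
proof -
  assume "beta_inf X idt"
  then have "inf_step beta_inf X (Lam (Var 0))" unfolding idt_def by (elim beta_infE)
  then obtain P where "beta_star X (Lam P)" "inf_step beta_inf P (Var 0)" by (elim inf_stepLamE) blast
  moreover from this(2) have "beta_star P (Var 0)" by (elim inf_stepVarE)
  ultimately show ?thesis unfolding idt_def using star_lam rtranclp_trans by metis
qed

lemma star_inf_idt: "beta_star X idt \<Longrightarrow> beta_inf X idt"
  unfolding idt_def
  by (rule beta_inf.intros, rule inf_step.ilam, assumption, rule inf_step.ivar, rule rtranclp.rtrancl_refl)

inductive_cases childE: "child M d N"

lemma fin_nobranch: "finite_trm M \<Longrightarrow> t 0 = M \<Longrightarrow> \<forall>n. child (t n) (d n) (t (Suc n)) \<Longrightarrow> False"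
proof (induction arbitrary: t d rule: finite_trm.induct)
  case (1 i)
  then show ?case by (metis child.cases trm.distinct(1,3))
next
  case (2 P)
  from "2.prems" have "child (Lam P) (d 0) (t 1)" by (metis One_nat_def)
  then have "t 1 = P" by (cases rule: child.cases) auto
  then show ?case using "2.IH"[of "\<lambda>n. t (Suc n)" "\<lambda>n. d (Suc n)"] "2.prems" by auto
next
  case (3 P Q)
  from "3.prems" have "child (App P Q) (d 0) (t 1)" by (metis One_nat_def)
  then have "t 1 = P \<or> t 1 = Q" by (cases rule: child.cases) auto
  then show ?case using "3.IH"(1)[of "\<lambda>n. t (Suc n)" "\<lambda>n. d (Suc n)"] "3.IH"(2)[of "\<lambda>n. t (Suc n)" "\<lambda>n. d (Suc n)"] "3.prems" by auto
qed

lemma fin_in001: "finite_trm M \<Longrightarrow> in001 M"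
  unfolding in001_def using fin_nobranch by blast

theorem mainTheorem11:
  fixes M :: trm
  assumes "in001 M"
  shows "(solvable_001 M \<longleftrightarrow> head_normalisable M)
       \<and> (head_normalisable M \<longleftrightarrow> solvable_Lambda M)"
proof -
  have A: "head_normalisable M" if "solvable_001 M"
    using that unfolding solvable_001_def using inf_idt key by blast
  have B: "head_normalisable M" if "solvable_Lambda M"
    using that unfolding solvable_Lambda_def using key by blast
  have C: "solvable_Lambda M" if "head_normalisable M"
    using hn_solv[OF that] unfolding solvable_Lambda_def by blast
  have D: "solvable_001 M" if "head_normalisable M"
    using hn_solv[OF that] fin_in001 star_inf_idt unfolding solvable_001_def by blast
  show ?thesis using A B C D by blast
qed


end
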